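(* Let $A$ be a division algebra over the field $\mathbb{C}(q)$ ($q$ an indeterminate), let $\alpha:A\to A$ be an algebra isomorphism, and let $A(X)_\alpha$ be the associated skew rational function algebra. If a skew rational fraction $f(X)\in A(X)_\alpha$ satisfies $f(X)=f(q^2X)$, then $f(X)$ is constant, i.e. $f\in A$.
   Context: The skew polynomial algebra $A[X]_\alpha$ consists of formal polynomials $\sum a_iX^i$ with $a_i\in A$, multiplied using the rule $Xa=\alpha(a)X$; it satisfies the Ore condition and $A(X)_\alpha$ denotes its fraction division algebra, whose elements are rational fractions in $X$ with coefficients in $A$ multiplying according to $Xa=\alpha(a)X$. The scalar $q$ is central, and $f(q^2X)$ denotes the result of substituting $q^2X$ for $X$ in $f$. *)

theory Defs
  imports "HOL-Computational_Algebra.Polynomial" "HOL-Computational_Algebra.Fraction_Field"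
begin

type_synonym cq = "complex poly fract"

definition qq :: cq where
  "qq = Fract [:0, 1:] 1"

text \<open>A division algebra over C(q): a division ring together with a ring homomorphism
  from C(q) into its centre (the structure map giving the scalar multiplication).\<close>
definition cq_division_algebra :: "(cq \<Rightarrow> 'a::division_ring) \<Rightarrow> bool" where
  "cq_division_algebra \<iota> \<longleftrightarrow>
     \<iota> 1 = 1 \<and> (\<forall>c d. \<iota> (c + d) = \<iota> c + \<iota> d) \<and> (\<forall>c d. \<iota> (c * d) = \<iota> c * \<iota> d) \<and>
     (\<forall>c a. \<iota> c * a = a * \<iota> c)"

definition algebra_iso :: "(cq \<Rightarrow> 'a::division_ring) \<Rightarrow> ('a \<Rightarrow> 'a) \<Rightarrow> bool" where
  "algebra_iso \<iota> \<alpha> \<longleftrightarrow> bij \<alpha> \<and> \<alpha> 1 = 1 \<and>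
     (\<forall>a b. \<alpha> (a + b) = \<alpha> a + \<alpha> b) \<and> (\<forall>a b. \<alpha> (a * b) = \<alpha> a * \<alpha> b) \<and>
     (\<forall>c a. \<alpha> (\<iota> c * a) = \<iota> c * \<alpha> a)"

text \<open>Skew polynomials in A[X]_alpha, represented by their coefficient sequences
  (p n = coefficient of X^n), finitely supported.\<close>
definition skew_poly :: "(nat \<Rightarrow> 'a::zero) \<Rightarrow> bool" where
  "skew_poly p \<longleftrightarrow> finite {n. p n \<noteq> 0}"

text \<open>Multiplication in A[X]_alpha using X a = alpha(a) X:
  (sum a_i X^i)(sum b_j X^j) = sum a_i alpha^i(b_j) X^(i+j).\<close>
definition skew_mult :: "('a \<Rightarrow> 'a) \<Rightarrow> (nat \<Rightarrow> 'a::ring) \<Rightarrow> (nat \<Rightarrow> 'a) \<Rightarrow> nat \<Rightarrow> 'a" where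
  "skew_mult \<alpha> p r = (\<lambda>n. \<Sum>i\<le>n. p i * (\<alpha> ^^ i) (r (n - i)))"

definition skew_const :: "'a \<Rightarrow> nat \<Rightarrow> 'a::zero" where
  "skew_const a = (\<lambda>n. if n = 0 then a else 0)"

text \<open>Substitution X := q^2 X: since q is central, sum a_i (q^2 X)^i = sum a_i q^(2i) X^i.\<close>
definition skew_subst_q2 :: "(cq \<Rightarrow> 'a::ring) \<Rightarrow> (nat \<Rightarrow> 'a) \<Rightarrow> nat \<Rightarrow> 'a" where
  "skew_subst_q2 \<iota> p = (\<lambda>i. \<iota> (qq ^ (2 * i)) * p i)"

text \<open>Elements of the fraction division algebra A(X)_alpha (Ore localisation of the domain
  A[X]_alpha) are right fractions p s^-1 with s \<noteq> 0; two fractions p s^-1 and p' s'^-1 are equal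
  iff there are skew polynomials u, v with s u = s' v \<noteq> 0 and p u = p' v.\<close>
definition skew_frac_eq :: "('a \<Rightarrow> 'a) \<Rightarrow> (nat \<Rightarrow> 'a::ring) \<times> (nat \<Rightarrow> 'a) \<Rightarrow> (nat \<Rightarrow> 'a) \<times> (nat \<Rightarrow> 'a) \<Rightarrow> bool" where
  "skew_frac_eq \<alpha> f g \<longleftrightarrow> (\<exists>u v. skew_poly u \<and> skew_poly v \<and>
      skew_mult \<alpha> (snd f) u = skew_mult \<alpha> (snd g) v \<and> skew_mult \<alpha> (snd f) u \<noteq> (\<lambda>_. 0) \<and>
      skew_mult \<alpha> (fst f) u = skew_mult \<alpha> (fst g) v)"

end

theory Submission
  imports Defs
begin

lemma qq_pow: "qq ^ j = Fract ([:0,1:] ^ j) 1"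
  unfolding qq_def by (induction j) (simp_all add: One_fract_def)

lemma qq_pow_inj: "qq ^ m = qq ^ n \<Longrightarrow> m = n"
proof -
  assume "qq ^ m = qq ^ n"
  hence "([:0,1:] ^ m :: complex poly) = [:0,1:] ^ n"
    by (simp add: qq_pow eq_fract)
  hence "degree ([:0,1:] ^ m :: complex poly) = degree ([:0,1:] ^ n :: complex poly)" by simp
  thus "m = n" by (simp add: degree_power_eq)
qed

lemma iota_facts:
  assumes "cq_division_algebra \<iota>"
  shows "\<iota> 0 = 0" and "\<And>c. c \<noteq> 0 \<Longrightarrow> \<iota> c \<noteq> 0" and "\<And>c d. \<iota> c = \<iota> d \<Longrightarrow> c = d"
    and "\<And>c a. \<iota> c * a = a * \<iota> c"
proof -
  have H: "\<iota> 1 = 1 \<and> (\<forall>c d. \<iota> (c + d) = \<iota> c + \<iota> d) \<and> (\<forall>c d. \<iota> (c * d) = \<iota> c * \<iota> d) \<and>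
     (\<forall>c a. \<iota> c * a = a * \<iota> c)" using assms unfolding cq_division_algebra_def .
  note one = H[THEN conjunct1]
  note add = H[THEN conjunct2, THEN conjunct1, rule_format]
  note mul = H[THEN conjunct2, THEN conjunct2, THEN conjunct1, rule_format]
  note cen = H[THEN conjunct2, THEN conjunct2, THEN conjunct2, rule_format]
  show z: "\<iota> 0 = 0" using add[of 0 0] by simp
  show nz: "\<And>c. c \<noteq> 0 \<Longrightarrow> \<iota> c \<noteq> 0"
  proof
    fix c :: cq assume "c \<noteq> 0" "\<iota> c = 0"
    have "\<iota> (c * inverse c) = \<iota> c * \<iota> (inverse c)" by (rule mul)
    also have "\<dots> = 0" using \<open>\<iota> c = 0\<close> by simp
    finally have "\<iota> (c * inverse c) = 0" .
    moreover have "c * inverse c = 1" using \<open>c \<noteq> 0\<close> by (rule right_inverse)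
    ultimately show False using one by simp
  qed
  show "\<And>c d. \<iota> c = \<iota> d \<Longrightarrow> c = d"
  proof (rule ccontr)
    fix c d :: cq assume "\<iota> c = \<iota> d" "c \<noteq> d"
    have "\<iota> c = \<iota> (c - d) + \<iota> d" using add[of "c - d" d] by simp
    hence "\<iota> (c - d) = 0" using \<open>\<iota> c = \<iota> d\<close> by simp
    thus False using nz[of "c - d"] \<open>c \<noteq> d\<close> by simp
  qed
  show "\<And>c a. \<iota> c * a = a * \<iota> c" by (rule cen)
qed

lemma alpha_facts:
  assumes "algebra_iso \<iota> \<alpha>"
  shows "(\<alpha> ^^ i) 0 = 0" and "(\<alpha> ^^ i) 1 = 1" and "inj (\<alpha> ^^ i)"
    and "(\<alpha> ^^ i) (\<iota> c * x) = \<iota> c * (\<alpha> ^^ i) x"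
    and "(\<alpha> ^^ i) (x * y) = (\<alpha> ^^ i) x * (\<alpha> ^^ i) y"
proof -
  have H: "bij \<alpha> \<and> \<alpha> 1 = 1 \<and>
     (\<forall>a b. \<alpha> (a + b) = \<alpha> a + \<alpha> b) \<and> (\<forall>a b. \<alpha> (a * b) = \<alpha> a * \<alpha> b) \<and>
     (\<forall>c a. \<alpha> (\<iota> c * a) = \<iota> c * \<alpha> a)" using assms unfolding algebra_iso_def .
  note b = H[THEN conjunct1]
  note one = H[THEN conjunct2, THEN conjunct1]
  note add = H[THEN conjunct2, THEN conjunct2, THEN conjunct1, rule_format]
  note mul = H[THEN conjunct2, THEN conjunct2, THEN conjunct2, THEN conjunct1, rule_format]
  note lin = H[THEN conjunct2, THEN conjunct2, THEN conjunct2, THEN conjunct2, rule_format]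
  have z: "\<alpha> 0 = 0" using add[of 0 0] by simp
  show "(\<alpha> ^^ i) 0 = 0" by (induction i) (simp_all add: z)
  show "(\<alpha> ^^ i) 1 = 1" by (induction i) (simp_all add: one)
  show "inj (\<alpha> ^^ i)" using b bij_is_inj inj_fn by blast
  show "(\<alpha> ^^ i) (\<iota> c * x) = \<iota> c * (\<alpha> ^^ i) x" by (induction i) (simp_all add: lin)
  show "(\<alpha> ^^ i) (x * y) = (\<alpha> ^^ i) x * (\<alpha> ^^ i) y" by (induction i) (simp_all add: mul)
qed

lemma low_mult:
  fixes p r :: "nat \<Rightarrow> 'a::ring"
  assumes a0: "\<And>i. (\<alpha> ^^ i) 0 = 0"
    and p: "\<And>i. i < m \<Longrightarrow> p i = 0" and r: "\<And>i. i < k \<Longrightarrow> r i = 0"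
  shows "j < m + k \<Longrightarrow> skew_mult \<alpha> p r j = 0"
    and "skew_mult \<alpha> p r (m + k) = p m * (\<alpha> ^^ m) (r k)"
proof -
  assume "j < m + k"
  show "skew_mult \<alpha> p r j = 0" unfolding skew_mult_def
  proof (rule sum.neutral, rule ballI)
    fix i assume "i \<in> {..j}"
    show "p i * (\<alpha> ^^ i) (r (j - i)) = 0"
    proof (cases "i < m")
      case True thus ?thesis using p by simp
    next
      case False
      hence "j - i < k" using \<open>j < m + k\<close> \<open>i \<in> {..j}\<close> by auto
      thus ?thesis using r a0 by simp
    qed
  qed
next
  show "skew_mult \<alpha> p r (m + k) = p m * (\<alpha> ^^ m) (r k)" unfolding skew_mult_def
  proof (subst sum.remove[of _ m])
    show "(p m * (\<alpha> ^^ m) (r (m + k - m)) + (\<Sum>i\<in>{..m + k} - {m}. p i * (\<alpha> ^^ i) (r (m + k - i))))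
       = p m * (\<alpha> ^^ m) (r k)"
    proof -
      have "(\<Sum>i\<in>{..m + k} - {m}. p i * (\<alpha> ^^ i) (r (m + k - i))) = 0"
      proof (rule sum.neutral, rule ballI)
        fix i assume "i \<in> {..m + k} - {m}"
        show "p i * (\<alpha> ^^ i) (r (m + k - i)) = 0"
        proof (cases "i < m")
          case True thus ?thesis using p by simp
        next
          case False
          hence "m + k - i < k" using \<open>i \<in> {..m + k} - {m}\<close> by auto
          thus ?thesis using r a0 by simp
        qed
      qed
      thus ?thesis by simp
    qed
  qed auto
qed

definition lowi :: "(nat \<Rightarrow> 'a::zero) \<Rightarrow> nat" where
  "lowi f = (LEAST i. f i \<noteq> 0)"

lemma lowi_props:
  assumes "f \<noteq> (\<lambda>_. 0)"
  shows "f (lowi f) \<noteq> 0" and "\<And>i. i < lowi f \<Longrightarrow> f i = 0"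
proof -
  obtain j where "f j \<noteq> 0" using assms by auto
  thus "f (lowi f) \<noteq> 0" unfolding lowi_def by (rule LeastI)
  show "\<And>i. i < lowi f \<Longrightarrow> f i = 0" unfolding lowi_def using not_less_Least by blast
qed

lemma low_unique:
  assumes "f m \<noteq> 0" "\<And>i. i < m \<Longrightarrow> f i = 0"
  shows "lowi f = m"
proof -
  have ne: "f \<noteq> (\<lambda>_. 0)" using assms by auto
  show ?thesis using lowi_props[OF ne] assms
    by (metis linorder_neqE_nat)
qed


lemma subst_low:
  assumes "cq_division_algebra \<iota>" "s \<noteq> (\<lambda>_. 0)"
  shows "skew_subst_q2 \<iota> s (lowi s) = \<iota> (qq ^ (2 * lowi s)) * s (lowi s)"
    and "skew_subst_q2 \<iota> s (lowi s) \<noteq> 0"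
    and "\<And>i. i < lowi s \<Longrightarrow> skew_subst_q2 \<iota> s i = 0"
proof -
  have qn: "qq \<noteq> 0" unfolding qq_def by (simp add: Zero_fract_def eq_fract)
  show "skew_subst_q2 \<iota> s (lowi s) = \<iota> (qq ^ (2 * lowi s)) * s (lowi s)"
    unfolding skew_subst_q2_def by simp
  show "skew_subst_q2 \<iota> s (lowi s) \<noteq> 0"
    unfolding skew_subst_q2_def using iota_facts(2)[OF assms(1), of "qq ^ (2 * lowi s)"] qn
      lowi_props(1)[OF assms(2)] by simp
  show "\<And>i. i < lowi s \<Longrightarrow> skew_subst_q2 \<iota> s i = 0"
    unfolding skew_subst_q2_def using lowi_props(2)[OF assms(2)] by simp
qed

lemma mult_zero_right_skew:
  assumes "algebra_iso \<iota> \<alpha>"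
  shows "skew_mult \<alpha> s (\<lambda>_. 0) = (\<lambda>_. 0)"
  unfolding skew_mult_def using alpha_facts(1)[OF assms] by simp

lemma lowcoef:
  fixes s u v :: "nat \<Rightarrow> 'a::division_ring"
  assumes io: "cq_division_algebra \<iota>" and al: "algebra_iso \<iota> \<alpha>"
    and sn: "s \<noteq> (\<lambda>_. 0)" and un: "u \<noteq> (\<lambda>_. 0)" and vn: "v \<noteq> (\<lambda>_. 0)"
    and eq: "skew_mult \<alpha> s u = skew_mult \<alpha> (skew_subst_q2 \<iota> s) v"
  shows "lowi u = lowi v" and "u (lowi u) = \<iota> (qq ^ (2 * lowi s)) * v (lowi u)"
proof -
  define m where "m = lowi s"
  define k where "k = lowi u"
  define k' where "k' = lowi v"
  have a0: "\<And>i. (\<alpha> ^^ i) 0 = 0" using alpha_facts(1)[OF al] .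
  have s0: "s m \<noteq> 0" "\<And>i. i < m \<Longrightarrow> s i = 0" using lowi_props[OF sn] m_def by auto
  have u0: "u k \<noteq> 0" "\<And>i. i < k \<Longrightarrow> u i = 0" using lowi_props[OF un] k_def by auto
  have v0: "v k' \<noteq> 0" "\<And>i. i < k' \<Longrightarrow> v i = 0" using lowi_props[OF vn] k'_def by auto
  have t0: "skew_subst_q2 \<iota> s m = \<iota> (qq ^ (2 * m)) * s m" "skew_subst_q2 \<iota> s m \<noteq> 0"
     "\<And>i. i < m \<Longrightarrow> skew_subst_q2 \<iota> s i = 0" using subst_low[OF io sn] m_def by auto
  have inj: "inj (\<alpha> ^^ m)" using alpha_facts(3)[OF al] .
  have A: "skew_mult \<alpha> s u (m + k) = s m * (\<alpha> ^^ m) (u k)"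
     "\<And>j. j < m + k \<Longrightarrow> skew_mult \<alpha> s u j = 0"
    using low_mult[OF a0, of m s k u] s0 u0 by auto
  have B: "skew_mult \<alpha> (skew_subst_q2 \<iota> s) v (m + k') = skew_subst_q2 \<iota> s m * (\<alpha> ^^ m) (v k')"
     "\<And>j. j < m + k' \<Longrightarrow> skew_mult \<alpha> (skew_subst_q2 \<iota> s) v j = 0"
    using low_mult[OF a0, of m "skew_subst_q2 \<iota> s" k' v] t0 v0 by auto
  have An: "s m * (\<alpha> ^^ m) (u k) \<noteq> 0"
    using s0 u0 inj a0 by (metis injD no_zero_divisors)
  have Bn: "skew_subst_q2 \<iota> s m * (\<alpha> ^^ m) (v k') \<noteq> 0"
    using t0 v0 inj a0 by (metis injD no_zero_divisors)
  have kk: "k = k'"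
  proof (rule ccontr)
    assume "k \<noteq> k'"
    then consider "k < k'" | "k' < k" by linarith
    thus False
    proof cases
      case 1 thus False using A(1) An B(2)[of "m + k"] eq by auto
    next
      case 2 thus False using B(1) Bn A(2)[of "m + k'"] eq by auto
    qed
  qed
  thus "lowi u = lowi v" using k_def k'_def by simp
  have "s m * (\<alpha> ^^ m) (u k) = \<iota> (qq ^ (2 * m)) * s m * (\<alpha> ^^ m) (v k)"
    using A(1) B(1) eq kk t0(1) by (metis mult.assoc)
  also have "\<dots> = s m * (\<alpha> ^^ m) (\<iota> (qq ^ (2 * m)) * v k)"
    using iota_facts(4)[OF io] alpha_facts(4)[OF al] by (simp add: mult.assoc)
  finally have "(\<alpha> ^^ m) (u k) = (\<alpha> ^^ m) (\<iota> (qq ^ (2 * m)) * v k)"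
    using s0(1) by simp
  hence "u k = \<iota> (qq ^ (2 * m)) * v k" using inj by (meson injD)
  thus "u (lowi u) = \<iota> (qq ^ (2 * lowi s)) * v (lowi u)" using k_def m_def by simp
qed


lemma mult_lin:
  fixes p s u :: "nat \<Rightarrow> 'a::ring"
  shows "skew_mult \<alpha> (\<lambda>i. p i - a * s i) u = (\<lambda>n. skew_mult \<alpha> p u n - a * skew_mult \<alpha> s u n)"
  unfolding skew_mult_def
  by (auto simp: algebra_simps sum_subtractf sum_distrib_left)

lemma subst_lin:
  assumes "cq_division_algebra \<iota>"
  shows "skew_subst_q2 \<iota> (\<lambda>i. p i - a * s i) = (\<lambda>i. skew_subst_q2 \<iota> p i - a * skew_subst_q2 \<iota> s i)"
proof -
  have cen: "\<And>c x. \<iota> c * x = x * \<iota> c" using iota_facts(4)[OF assms] .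
  show ?thesis unfolding skew_subst_q2_def
    by (rule ext) (simp add: algebra_simps cen)
qed

lemma const1_right:
  assumes "algebra_iso \<iota> \<alpha>"
  shows "skew_mult \<alpha> s (skew_const 1) = s"
proof
  fix n
  have "skew_mult \<alpha> s (skew_const 1) n = (\<Sum>i\<le>n. if i = n then s n else 0)"
    unfolding skew_mult_def skew_const_def
    by (rule sum.cong) (auto simp: alpha_facts[OF assms])
  thus "skew_mult \<alpha> s (skew_const 1) n = s n" by simp
qed

lemma const_left:
  shows "skew_mult \<alpha> (skew_const a) s = (\<lambda>n. a * s n)"
proof
  fix n
  have "skew_mult \<alpha> (skew_const a) s n = (\<Sum>i\<le>n. if i = 0 then a * s n else 0)"
    unfolding skew_mult_def skew_const_def
    by (rule sum.cong) auto
  thus "skew_mult \<alpha> (skew_const a) s n = a * s n" by simp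
qed

theorem lemma5:
  fixes \<iota> :: "cq \<Rightarrow> 'a::division_ring" and \<alpha> :: "'a \<Rightarrow> 'a"
    and p s :: "nat \<Rightarrow> 'a"
  assumes "cq_division_algebra \<iota>"
    and "algebra_iso \<iota> \<alpha>"
    and "skew_poly p" and "skew_poly s" and "s \<noteq> (\<lambda>_. 0)"
    and "skew_frac_eq \<alpha> (p, s) (skew_subst_q2 \<iota> p, skew_subst_q2 \<iota> s)"
  shows "\<exists>a. skew_frac_eq \<alpha> (p, s) (skew_const a, skew_const 1)"
proof -
  note io = assms(1) and al = assms(2) and sn = assms(5)
  obtain u v where uv: "skew_mult \<alpha> s u = skew_mult \<alpha> (skew_subst_q2 \<iota> s) v"
    "skew_mult \<alpha> s u \<noteq> (\<lambda>_. 0)" "skew_mult \<alpha> p u = skew_mult \<alpha> (skew_subst_q2 \<iota> p) v"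
    using assms(6) unfolding skew_frac_eq_def by auto
  have un: "u \<noteq> (\<lambda>_. 0)" using uv(2) mult_zero_right_skew[OF al] by auto
  have vn: "v \<noteq> (\<lambda>_. 0)" using uv(1,2) mult_zero_right_skew[OF al] by auto
  define m where "m = lowi s"
  define a where "a = p m * inverse (s m)"
  define g where "g = (\<lambda>i. p i - a * s i)"
  have sm: "s m \<noteq> 0" using lowi_props(1)[OF sn] m_def by simp
  have gm: "g m = 0" unfolding g_def a_def using sm by (simp add: mult.assoc)
  have geq: "skew_mult \<alpha> g u = skew_mult \<alpha> (skew_subst_q2 \<iota> g) v"
    unfolding g_def subst_lin[OF io] mult_lin using uv(1,3) by simp
  have g0: "g = (\<lambda>_. 0)"
  proof (rule ccontr)
    assume gn: "g \<noteq> (\<lambda>_. 0)"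
    have c1: "u (lowi u) = \<iota> (qq ^ (2 * lowi s)) * v (lowi u)" "lowi u = lowi v"
      using lowcoef[OF io al sn un vn uv(1)] by auto
    have c2: "u (lowi u) = \<iota> (qq ^ (2 * lowi g)) * v (lowi u)"
      using lowcoef[OF io al gn un vn geq] by auto
    have vk: "v (lowi u) \<noteq> 0" using lowi_props(1)[OF vn] c1(2) by simp
    have "\<iota> (qq ^ (2 * lowi s)) = \<iota> (qq ^ (2 * lowi g))"
      using c1(1) c2 vk by (metis mult_right_cancel)
    hence "qq ^ (2 * lowi s) = qq ^ (2 * lowi g)" using iota_facts(3)[OF io] by blast
    hence "lowi g = m" using qq_pow_inj m_def by fastforce
    thus False using lowi_props(1)[OF gn] gm by simp
  qed
  hence peq: "p = (\<lambda>i. a * s i)" unfolding g_def by (auto simp: fun_eq_iff)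
  have "skew_poly (skew_const (1::'a))" unfolding skew_poly_def skew_const_def by simp
  moreover have "skew_mult \<alpha> s (skew_const 1) = skew_mult \<alpha> (skew_const 1) s"
    using const1_right[OF al] const_left[of \<alpha> 1 s] by simp
  moreover have "skew_mult \<alpha> p (skew_const 1) = skew_mult \<alpha> (skew_const a) s"
    using const1_right[OF al] const_left[of \<alpha> a s] peq by simp
  ultimately have "skew_frac_eq \<alpha> (p, s) (skew_const a, skew_const 1)"
    unfolding skew_frac_eq_def fst_conv snd_conv
    apply (rule_tac x="skew_const 1" in exI, rule_tac x=s in exI)
    using assms(4) sn const1_right[OF al] by simp
  thus ?thesis by blast
qed

end
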